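(* Let $P,PA$ be labelings, $c$ a command and $\rho_1,\rho_2,\mu_1,\mu_2$ states. Assume $\mathtt b\notin\mathrm{UsedVars}(c)$, $\rho_1(\mathtt b)=\rho_2(\mathtt b)=0$, $|a|_{\mu_1}>0$ and $|a|_{\mu_2}>0$ for every array $a$, $P;PA\vdash_{\mathtt{true}}c$, $\rho_1\sim_P\rho_2$, $\mu_1\sim_{PA}\mu_2$, and $\langle c,\rho_1,\mu_1\rangle\approx\langle c,\rho_2,\mu_2\rangle$. Then $\langle\mathrm{FvSLH}_P(c),\rho_1,\mu_1,\mathtt{false}\rangle\approx_s\langle\mathrm{FvSLH}_P(c),\rho_2,\mu_2,\mathtt{false}\rangle$.
   Context: Language AWhile: scalar variables $X\in\mathcal V$, arrays $a\in\mathcal A$; $e::=n\mid X\mid\mathrm{op}_{\mathbb N}(e,\dots,e)\mid be\,?\,e_1:e_2$; $be::=\mathtt{true}\mid\mathtt{false}\mid\mathrm{cmp}(e,e)\mid\mathrm{op}_{\mathbb B}(be,\dots,be)$; $c::=\mathtt{skip}\mid X:=e\mid c_1;c_2\mid\mathtt{if}\ be\ \mathtt{then}\ c_1\ \mathtt{else}\ c_2\mid\mathtt{while}\ be\ \mathtt{do}\ c\mid X\leftarrow a[e]\mid a[e]\leftarrow e'$. Scalar state $\rho:\mathcal V\to\mathbb N$; array state $\mu$ with sizes $|a|_\mu$ and values $\mu(a)[i]$; $[\![\cdot]\!]_\rho$ pure evaluation. $\mathrm{UsedVars}(c)$: scalar variables occurring in $c$; $\mathtt b$ a reserved scalar variable.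 Sequential semantics: $X:=e\to\mathtt{skip}$ updating $X$; $c_1;c_2\xrightarrow{o}c_1';c_2$ if $c_1\xrightarrow{o}c_1'$; $\mathtt{skip};c\to c$; conditional goes to branch $v=[\![be]\!]_\rho$ observing $\mathrm{branch}(v)$; $\mathtt{while}\ be\ \mathtt{do}\ c\to\mathtt{if}\ be\ \mathtt{then}\ (c;\mathtt{while}\ be\ \mathtt{do}\ c)\ \mathtt{else}\ \mathtt{skip}$; $X\leftarrow a[ie]$ with $i=[\![ie]\!]_\rho<|a|_\mu$ sets $X:=\mu(a)[i]$ observing $\mathrm{read}(a,i)$; $a[ie]\leftarrow e$ with $i<|a|_\mu$ sets $\mu[a[i]\mapsto[\![e]\!]_\rho]$ observing $\mathrm{write}(a,i)$. $\langle c_1,\rho_1,\mu_1\rangle\approx\langle c_2,\rho_2,\mu_2\rangle$ iff for all multi-step executions $\langle c_k,\rho_k,\mu_k\rangle\xrightarrow{O_k}{}^*$ (any prefix), one of $O_1,O_2$ is a prefix of the other. Speculative semantics: configurations $\langle c,\rho,\mu,\beta\rangle$; non-observing rules as sequentially (flag kept, no directive). Conditional: with directive $\mathit{step}$ as sequentially; with $\mathit{force}$ go to branch $\neg[\![be]\!]_\rho$, set $\beta:=\mathtt{true}$; obs $\mathrm{branch}([\![be]\!]_\rho)$. Reads/writes with $\mathit{step}$ as sequentially. Read with $\mathrm{load}(a',j)$: requires $\beta=\mathtt{true}$, $i=[\![ie]\!]_\rho\ge|a|_\mu$, $j<|a'|_\mu$, sets $X:=\mu(a')[j]$, obs $\mathrm{read}(a,i)$.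 Write with $\mathrm{store}(a',j)$: requires $\beta=\mathtt{true}$, $i\ge|a|_\mu$, $j<|a'|_\mu$, sets $\mu[a'[j]\mapsto[\![e]\!]_\rho]$, obs $\mathrm{write}(a,i)$. $\langle c_1,\rho_1,\mu_1,\beta_1\rangle\approx_s\langle c_2,\rho_2,\mu_2,\beta_2\rangle$ iff for all $D,O_1,O_2$, whenever both multi-step with the same directive list $D$ producing $O_1,O_2$, $O_1=O_2$. Labels: $\mathtt{true}$=public, $\mathtt{false}$=secret; $\ell_1\sqsubseteq\ell_2$ iff $\ell_2=\mathtt{true}\Rightarrow\ell_1=\mathtt{true}$; $\ell_1\sqcup\ell_2=\ell_1\wedge\ell_2$. $P(e),P(be)$ public iff all variables occurring are public. $\rho_1\sim_P\rho_2$: agreement on public scalar variables; $\mu_1\sim_{PA}\mu_2$: agreement on sizes and contents of public arrays. IFC typing $P;PA\vdash_{pc}c$: $\mathtt{skip}$; $X:=e$ if $pc\sqcup P(e)\sqsubseteq P(X)$; $c_1;c_2$ if both typed under $pc$; $\mathtt{if}$ if both branches typed under $pc\sqcup P(be)$; $\mathtt{while}$ if body typed under $pc\sqcup P(be)$; $X\leftarrow a[i]$ if $pc\sqcup P(i)\sqcup PA(a)\sqsubseteq P(X)$; $a[i]\leftarrow e$ if $pc\sqcup P(i)\sqcup P(e)\sqsubseteq PA(a)$. Transformation $\mathrm{FvSLH}_P$: with $m(i)=(\mathtt b==1)\,?\,0:i$ and $B(be)=(\mathtt b==0\ \&\&\ be)$ if $P(be)=\mathtt{false}$, else $be$: $\mathtt{skip}$,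 $X:=e$ unchanged; sequences translated componentwise; $\mathtt{if}\ be\ \mathtt{then}\ c_1\ \mathtt{else}\ c_2\mapsto\mathtt{if}\ B(be)\ \mathtt{then}\ (\mathtt b:=B(be)\,?\,\mathtt b:1;[\![c_1]\!])\ \mathtt{else}\ (\mathtt b:=B(be)\,?\,1:\mathtt b;[\![c_2]\!])$; $\mathtt{while}\ be\ \mathtt{do}\ c\mapsto(\mathtt{while}\ B(be)\ \mathtt{do}\ (\mathtt b:=B(be)\,?\,\mathtt b:1;[\![c]\!]));\ \mathtt b:=B(be)\,?\,1:\mathtt b$; $X\leftarrow a[i]\mapsto (X\leftarrow a[i];\ X:=(\mathtt b==1)\,?\,0:X)$ if $P(X)=\mathtt{true}$ and $P(i)=\mathtt{true}$; otherwise $X\leftarrow a[m(i)]$ if $P(i)=\mathtt{false}$ and $X\leftarrow a[i]$ if $P(i)=\mathtt{true}$; $a[i]\leftarrow e\mapsto a[m(i)]\leftarrow e$ if $P(i)=\mathtt{false}$, unchanged otherwise. *)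

theory Defs
  imports Main "HOL-Library.Sublist"
begin

type_synonym vname = string
type_synonym aname = string

datatype aexp =
    ANum nat
  | AId vname
  | AOp "nat list \<Rightarrow> nat" "aexp list"
  | ACTIf bexp aexp aexp
and bexp =
    BTrue
  | BFalse
  | BCmp "nat \<Rightarrow> nat \<Rightarrow> bool" aexp aexp
  | BOp "bool list \<Rightarrow> bool" "bexp list"

datatype com =
    Skip
  | Asgn vname aexp
  | Seq com com
  | If bexp com com
  | While bexp com
  | ARead vname aname aexp
  | AWrite aname aexp aexp

type_synonym state = "vname \<Rightarrow> nat"
type_synonym mem = "aname \<Rightarrow> nat list"   (* |a| = length (mu a), mu(a)[i] = mu a ! i *)

definition bvar :: vname where "bvar = ''b''"

fun aeval :: "state \<Rightarrow> aexp \<Rightarrow> nat" and beval :: "state \<Rightarrow> bexp \<Rightarrow> bool" where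
  "aeval s (ANum n) = n"
| "aeval s (AId x) = s x"
| "aeval s (AOp f es) = f (map (aeval s) es)"
| "aeval s (ACTIf b e1 e2) = (if beval s b then aeval s e1 else aeval s e2)"
| "beval s BTrue = True"
| "beval s BFalse = False"
| "beval s (BCmp r e1 e2) = r (aeval s e1) (aeval s e2)"
| "beval s (BOp f bs) = f (map (beval s) bs)"

fun avars :: "aexp \<Rightarrow> vname set" and bvars :: "bexp \<Rightarrow> vname set" where
  "avars (ANum n) = {}"
| "avars (AId x) = {x}"
| "avars (AOp f es) = \<Union> (set (map avars es))"
| "avars (ACTIf b e1 e2) = bvars b \<union> avars e1 \<union> avars e2"
| "bvars BTrue = {}"
| "bvars BFalse = {}"
| "bvars (BCmp r e1 e2) = avars e1 \<union> avars e2"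
| "bvars (BOp f bs) = \<Union> (set (map bvars bs))"

fun used_vars :: "com \<Rightarrow> vname set" where
  "used_vars Skip = {}"
| "used_vars (Asgn x e) = {x} \<union> avars e"
| "used_vars (Seq c1 c2) = used_vars c1 \<union> used_vars c2"
| "used_vars (If b c1 c2) = bvars b \<union> used_vars c1 \<union> used_vars c2"
| "used_vars (While b c) = bvars b \<union> used_vars c"
| "used_vars (ARead x a i) = {x} \<union> avars i"
| "used_vars (AWrite a i e) = avars i \<union> avars e"

datatype obs = OBranch bool | ORead aname nat | OWrite aname nat
datatype dir = DStep | DForce | DLoad aname nat | DStore aname nat

section \<open>Sequential semantics\<close>

inductive seq_step :: "com \<times> state \<times> mem \<Rightarrow> obs list \<Rightarrow> com \<times> state \<times> mem \<Rightarrow> bool" where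
  Asgn: "seq_step (Asgn x e, \<rho>, \<mu>) [] (Skip, \<rho>(x := aeval \<rho> e), \<mu>)"
| Seq: "seq_step (c1, \<rho>, \<mu>) os (c1', \<rho>', \<mu>') \<Longrightarrow> seq_step (Seq c1 c2, \<rho>, \<mu>) os (Seq c1' c2, \<rho>', \<mu>')"
| SeqSkip: "seq_step (Seq Skip c, \<rho>, \<mu>) [] (c, \<rho>, \<mu>)"
| If: "seq_step (If b c1 c2, \<rho>, \<mu>) [OBranch (beval \<rho> b)]
         ((if beval \<rho> b then c1 else c2), \<rho>, \<mu>)"
| While: "seq_step (While b c, \<rho>, \<mu>) [] (If b (Seq c (While b c)) Skip, \<rho>, \<mu>)"
| ARead: "aeval \<rho> ie = i \<Longrightarrow> i < length (\<mu> a) \<Longrightarrow>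
    seq_step (ARead x a ie, \<rho>, \<mu>) [ORead a i] (Skip, \<rho>(x := \<mu> a ! i), \<mu>)"
| AWrite: "aeval \<rho> ie = i \<Longrightarrow> i < length (\<mu> a) \<Longrightarrow>
    seq_step (AWrite a ie e, \<rho>, \<mu>) [OWrite a i] (Skip, \<rho>, \<mu>(a := (\<mu> a)[i := aeval \<rho> e]))"

inductive seq_steps :: "com \<times> state \<times> mem \<Rightarrow> obs list \<Rightarrow> com \<times> state \<times> mem \<Rightarrow> bool" where
  refl: "seq_steps cfg [] cfg"
| step: "seq_step cfg os cfg' \<Longrightarrow> seq_steps cfg' os' cfg'' \<Longrightarrow> seq_steps cfg (os @ os') cfg''"

definition seq_equiv :: "com \<times> state \<times> mem \<Rightarrow> com \<times> state \<times> mem \<Rightarrow> bool" where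
  "seq_equiv cfg1 cfg2 \<longleftrightarrow>
     (\<forall>O1 O2 cfg1' cfg2'. seq_steps cfg1 O1 cfg1' \<longrightarrow> seq_steps cfg2 O2 cfg2' \<longrightarrow>
        prefix O1 O2 \<or> prefix O2 O1)"

section \<open>Speculative semantics\<close>

inductive spec_step :: "com \<times> state \<times> mem \<times> bool \<Rightarrow> dir list \<Rightarrow> obs list \<Rightarrow>
                        com \<times> state \<times> mem \<times> bool \<Rightarrow> bool" where
  Asgn: "spec_step (Asgn x e, \<rho>, \<mu>, \<beta>) [] [] (Skip, \<rho>(x := aeval \<rho> e), \<mu>, \<beta>)"
| Seq: "spec_step (c1, \<rho>, \<mu>, \<beta>) ds os (c1', \<rho>', \<mu>', \<beta>') \<Longrightarrow>
    spec_step (Seq c1 c2, \<rho>, \<mu>, \<beta>) ds os (Seq c1' c2, \<rho>', \<mu>', \<beta>')"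
| SeqSkip: "spec_step (Seq Skip c, \<rho>, \<mu>, \<beta>) [] [] (c, \<rho>, \<mu>, \<beta>)"
| If: "spec_step (If b c1 c2, \<rho>, \<mu>, \<beta>) [DStep] [OBranch (beval \<rho> b)]
         ((if beval \<rho> b then c1 else c2), \<rho>, \<mu>, \<beta>)"
| IfForce: "spec_step (If b c1 c2, \<rho>, \<mu>, \<beta>) [DForce] [OBranch (beval \<rho> b)]
         ((if \<not> beval \<rho> b then c1 else c2), \<rho>, \<mu>, True)"
| While: "spec_step (While b c, \<rho>, \<mu>, \<beta>) [] [] (If b (Seq c (While b c)) Skip, \<rho>, \<mu>, \<beta>)"
| ARead: "aeval \<rho> ie = i \<Longrightarrow> i < length (\<mu> a) \<Longrightarrow>
    spec_step (ARead x a ie, \<rho>, \<mu>, \<beta>) [DStep] [ORead a i] (Skip, \<rho>(x := \<mu> a ! i), \<mu>, \<beta>)"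
| ALoad: "aeval \<rho> ie = i \<Longrightarrow> i \<ge> length (\<mu> a) \<Longrightarrow> j < length (\<mu> a') \<Longrightarrow>
    spec_step (ARead x a ie, \<rho>, \<mu>, True) [DLoad a' j] [ORead a i] (Skip, \<rho>(x := \<mu> a' ! j), \<mu>, True)"
| AWrite: "aeval \<rho> ie = i \<Longrightarrow> i < length (\<mu> a) \<Longrightarrow>
    spec_step (AWrite a ie e, \<rho>, \<mu>, \<beta>) [DStep] [OWrite a i]
      (Skip, \<rho>, \<mu>(a := (\<mu> a)[i := aeval \<rho> e]), \<beta>)"
| AStore: "aeval \<rho> ie = i \<Longrightarrow> i \<ge> length (\<mu> a) \<Longrightarrow> j < length (\<mu> a') \<Longrightarrow>
    spec_step (AWrite a ie e, \<rho>, \<mu>, True) [DStore a' j] [OWrite a i]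
      (Skip, \<rho>, \<mu>(a' := (\<mu> a')[j := aeval \<rho> e]), True)"

inductive spec_steps :: "com \<times> state \<times> mem \<times> bool \<Rightarrow> dir list \<Rightarrow> obs list \<Rightarrow>
                         com \<times> state \<times> mem \<times> bool \<Rightarrow> bool" where
  refl: "spec_steps cfg [] [] cfg"
| step: "spec_step cfg ds os cfg' \<Longrightarrow> spec_steps cfg' ds' os' cfg'' \<Longrightarrow>
    spec_steps cfg (ds @ ds') (os @ os') cfg''"

definition spec_equiv :: "com \<times> state \<times> mem \<times> bool \<Rightarrow> com \<times> state \<times> mem \<times> bool \<Rightarrow> bool" where
  "spec_equiv cfg1 cfg2 \<longleftrightarrow>
     (\<forall>D O1 O2 cfg1' cfg2'. spec_steps cfg1 D O1 cfg1' \<longrightarrow> spec_steps cfg2 D O2 cfg2' \<longrightarrow> O1 = O2)"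

text \<open>True = public, False = secret.\<close>
type_synonym label = bool

definition label_le :: "label \<Rightarrow> label \<Rightarrow> bool" where
  "label_le l1 l2 \<longleftrightarrow> (l2 \<longrightarrow> l1)"

definition join :: "label \<Rightarrow> label \<Rightarrow> label" where
  "join l1 l2 = (l1 \<and> l2)"

definition alabel :: "(vname \<Rightarrow> label) \<Rightarrow> aexp \<Rightarrow> label" where
  "alabel P e \<longleftrightarrow> (\<forall>x\<in>avars e. P x)"

definition blabel :: "(vname \<Rightarrow> label) \<Rightarrow> bexp \<Rightarrow> label" where
  "blabel P be \<longleftrightarrow> (\<forall>x\<in>bvars be. P x)"

definition pub_equiv :: "(vname \<Rightarrow> label) \<Rightarrow> state \<Rightarrow> state \<Rightarrow> bool" where
  "pub_equiv P \<rho>1 \<rho>2 \<longleftrightarrow> (\<forall>x. P x \<longrightarrow> \<rho>1 x = \<rho>2 x)"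

definition pub_equiv_mem :: "(aname \<Rightarrow> label) \<Rightarrow> mem \<Rightarrow> mem \<Rightarrow> bool" where
  "pub_equiv_mem PA \<mu>1 \<mu>2 \<longleftrightarrow> (\<forall>a. PA a \<longrightarrow> \<mu>1 a = \<mu>2 a)"

inductive well_typed :: "(vname \<Rightarrow> label) \<Rightarrow> (aname \<Rightarrow> label) \<Rightarrow> label \<Rightarrow> com \<Rightarrow> bool" where
  Skip: "well_typed P PA pc Skip"
| Asgn: "label_le (join pc (alabel P e)) (P x) \<Longrightarrow> well_typed P PA pc (Asgn x e)"
| Seq: "well_typed P PA pc c1 \<Longrightarrow> well_typed P PA pc c2 \<Longrightarrow> well_typed P PA pc (Seq c1 c2)"
| If: "well_typed P PA (join pc (blabel P b)) c1 \<Longrightarrow> well_typed P PA (join pc (blabel P b)) c2 \<Longrightarrow>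
    well_typed P PA pc (If b c1 c2)"
| While: "well_typed P PA (join pc (blabel P b)) c \<Longrightarrow> well_typed P PA pc (While b c)"
| ARead: "label_le (join (join pc (alabel P i)) (PA a)) (P x) \<Longrightarrow> well_typed P PA pc (ARead x a i)"
| AWrite: "label_le (join (join pc (alabel P i)) (alabel P e)) (PA a) \<Longrightarrow>
    well_typed P PA pc (AWrite a i e)"

section \<open>The FvSLH transformation\<close>

definition b_eq :: "nat \<Rightarrow> bexp" where
  "b_eq n = BCmp (=) (AId bvar) (ANum n)"

definition band :: "bexp \<Rightarrow> bexp \<Rightarrow> bexp" where
  "band b1 b2 = BOp (\<lambda>bs. bs ! 0 \<and> bs ! 1) [b1, b2]"

definition mask_idx :: "aexp \<Rightarrow> aexp" where
  "mask_idx i = ACTIf (b_eq 1) (ANum 0) i"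

definition guard :: "(vname \<Rightarrow> label) \<Rightarrow> bexp \<Rightarrow> bexp" where
  "guard P be = (if \<not> blabel P be then band (b_eq 0) be else be)"

fun fvslh :: "(vname \<Rightarrow> label) \<Rightarrow> com \<Rightarrow> com" where
  "fvslh P Skip = Skip"
| "fvslh P (Asgn x e) = Asgn x e"
| "fvslh P (Seq c1 c2) = Seq (fvslh P c1) (fvslh P c2)"
| "fvslh P (If be c1 c2) =
     If (guard P be)
        (Seq (Asgn bvar (ACTIf (guard P be) (AId bvar) (ANum 1))) (fvslh P c1))
        (Seq (Asgn bvar (ACTIf (guard P be) (ANum 1) (AId bvar))) (fvslh P c2))"
| "fvslh P (While be c) =
     Seq (While (guard P be) (Seq (Asgn bvar (ACTIf (guard P be) (AId bvar) (ANum 1))) (fvslh P c)))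
         (Asgn bvar (ACTIf (guard P be) (ANum 1) (AId bvar)))"
| "fvslh P (ARead x a i) =
     (if P x \<and> alabel P i then Seq (ARead x a i) (Asgn x (ACTIf (b_eq 1) (ANum 0) (AId x)))
      else if \<not> alabel P i then ARead x a (mask_idx i)
      else ARead x a i)"
| "fvslh P (AWrite a i e) =
     (if \<not> alabel P i then AWrite a (mask_idx i) e else AWrite a i e)"

end

theory Submission
  imports Defs
begin

lemmas seq_step_induct = seq_step.induct[split_format(complete)]
lemmas spec_step_induct = spec_step.induct[split_format(complete)]

lemma eval_agree:
  "(\<forall>x\<in>avars e. s1 x = s2 x) \<Longrightarrow> aeval s1 e = aeval s2 e"
  "(\<forall>x\<in>bvars b. s1 x = s2 x) \<Longrightarrow> beval s1 b = beval s2 b"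
proof (induction e and b)
  case (AOp f es)
  then have "map (aeval s1) es = map (aeval s2) es" by (auto simp: map_eq_conv)
  then show ?case by (metis aeval.simps(3))
next
  case (BOp f bs)
  then have "map (beval s1) bs = map (beval s2) bs" by (auto simp: map_eq_conv)
  then show ?case by (metis beval.simps(4))
qed simp_all

inductive_cases seqSkipE[elim!]: "seq_step (Skip, s, m) os cfg"
inductive_cases seqAsgnE[elim!]: "seq_step (Asgn x e, s, m) os cfg"
inductive_cases seqSeqE[elim]: "seq_step (Seq c1 c2, s, m) os cfg"
inductive_cases seqIfE[elim!]: "seq_step (If b c1 c2, s, m) os cfg"
inductive_cases seqWhileE[elim!]: "seq_step (While b c, s, m) os cfg"
inductive_cases seqReadE[elim!]: "seq_step (ARead x a i, s, m) os cfg"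
inductive_cases seqWriteE[elim!]: "seq_step (AWrite a i e, s, m) os cfg"

inductive_cases specSkipE[elim!]: "spec_step (Skip, s, m, \<beta>) ds os cfg"
inductive_cases specAsgnE[elim!]: "spec_step (Asgn x e, s, m, \<beta>) ds os cfg"
inductive_cases specSeqE[elim]: "spec_step (Seq c1 c2, s, m, \<beta>) ds os cfg"
inductive_cases specIfE[elim!]: "spec_step (If b c1 c2, s, m, \<beta>) ds os cfg"
inductive_cases specWhileE[elim!]: "spec_step (While b c, s, m, \<beta>) ds os cfg"
inductive_cases specReadE[elim!]: "spec_step (ARead x a i, s, m, \<beta>) ds os cfg"
inductive_cases specWriteE[elim!]: "spec_step (AWrite a i e, s, m, \<beta>) ds os cfg"

lemma specSeq_inv: "spec_step (Seq c1 c2, s, m, b) ds os (t', s', m', b') \<Longrightarrow>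
  (\<exists>c1'. t' = Seq c1' c2 \<and> spec_step (c1,s,m,b) ds os (c1',s',m',b')) \<or>
  (c1 = Skip \<and> t' = c2 \<and> ds = [] \<and> os = [] \<and> s' = s \<and> m' = m \<and> b' = b)"
  by (erule specSeqE) auto

lemma seqSeq_inv: "seq_step (Seq c1 c2, s, m) os (t', s', m') \<Longrightarrow>
  (\<exists>c1'. t' = Seq c1' c2 \<and> seq_step (c1,s,m) os (c1',s',m')) \<or>
  (c1 = Skip \<and> t' = c2 \<and> os = [] \<and> s' = s \<and> m' = m)"
  by (erule seqSeqE) auto

lemma spec_len: "spec_step cfg ds os cfg' \<Longrightarrow> length os = length ds"
  by (induction rule: spec_step.induct) auto

lemma spec_steps_len: "spec_steps cfg ds os cfg' \<Longrightarrow> length os = length ds"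
  by (induction rule: spec_steps.induct) (auto dest: spec_len)

lemma spec_len2: "spec_step (t,s1,m1,b1) ds1 os1 (t1,s1',m1',b1') \<Longrightarrow> spec_step (t,s2,m2,b2) ds2 os2 (t2,s2',m2',b2') \<Longrightarrow> length ds1 = length ds2"
proof (induction arbitrary: s2 m2 b2 ds2 os2 t2 s2' m2' b2' rule: spec_step_induct)
  case (Seq c1 \<rho> \<mu> \<beta> ds os c1' \<rho>' \<mu>' \<beta>' c2)
  from specSeq_inv[OF Seq.prems] show ?case
  proof (elim disjE exE conjE)
    fix c1'' assume a: "t2 = Seq c1'' c2" "spec_step (c1, s2, m2, b2) ds2 os2 (c1'', s2', m2', b2')"
    show ?thesis by (rule Seq.IH[OF a(2)])
  next
    assume "c1 = Skip" then show ?thesis using Seq.hyps by auto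
  qed
next
  case (SeqSkip c \<rho> \<mu> \<beta>)
  from specSeq_inv[OF SeqSkip.prems] show ?case by auto
qed auto

lemma spec_det: "spec_step (t,s1,m1,b1) ds os (t1,s1',m1',b1') \<Longrightarrow> spec_step (t,s2,m2,b2) ds os (t2,s2',m2',b2') \<Longrightarrow> t1 = t2"
proof (induction arbitrary: s2 m2 b2 t2 s2' m2' b2' rule: spec_step_induct)
  case (Seq c1 \<rho> \<mu> \<beta> ds os c1' \<rho>' \<mu>' \<beta>' c2)
  from specSeq_inv[OF Seq.prems] show ?case
  proof (elim disjE exE conjE)
    fix c1'' assume a: "t2 = Seq c1'' c2" "spec_step (c1, s2, m2, b2) ds os (c1'', s2', m2', b2')"
    show ?thesis using Seq.IH[OF a(2)] a(1) by simp
  next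
    assume "c1 = Skip" then show ?thesis using Seq.hyps by auto
  qed
next
  case (SeqSkip c \<rho> \<mu> \<beta>)
  from specSeq_inv[OF SeqSkip.prems] show ?case by auto
qed auto

lemma spec_beta: "spec_step (t,s,m,b) ds os (t',s',m',b') \<Longrightarrow> b \<Longrightarrow> b'"
  by (induction rule: spec_step_induct) auto

lemma seq_IfT[intro]: "beval \<rho> b \<Longrightarrow> seq_step (If b c1 c2,\<rho>,\<mu>) [OBranch True] (c1,\<rho>,\<mu>)"
  using seq_step.If[of b c1 c2 \<rho> \<mu>] by simp
lemma seq_IfF[intro]: "\<not> beval \<rho> b \<Longrightarrow> seq_step (If b c1 c2,\<rho>,\<mu>) [OBranch False] (c2,\<rho>,\<mu>)"
  using seq_step.If[of b c1 c2 \<rho> \<mu>] by simp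

lemma spec_to_seq: "spec_step (t,s,m,b) ds os (t',s',m',b') \<Longrightarrow> \<not> b \<Longrightarrow> ds \<noteq> [DForce] \<Longrightarrow>
   \<not> b' \<and> seq_step (t,s,m) os (t',s',m')"
proof (induction rule: spec_step_induct)
  case (Seq c1 \<rho> \<mu> \<beta> ds os c1' \<rho>' \<mu>' \<beta>' c2)
  then show ?case using seq_step.Seq by blast
next
  case (If \<rho> b c1 c2 \<mu> \<beta>)
  then show ?case using seq_step.If by blast
qed (simp_all add: seq_step.Asgn seq_step.SeqSkip seq_step.While seq_step.ARead seq_step.AWrite)

lemma spec_force: "spec_step (t,s,m,b) ds os (t',s',m',b') \<Longrightarrow> ds = [DForce] \<Longrightarrow>
   \<exists>t''. seq_step (t,s,m) os (t'',s,m) \<and> s' = s \<and> m' = m \<and> b'"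
proof (induction rule: spec_step_induct)
  case (Seq c1 \<rho> \<mu> \<beta> ds os c1' \<rho>' \<mu>' \<beta>' c2)
  then show ?case using seq_step.Seq by blast
next
  case (IfForce \<rho> b c1 c2 \<mu> \<beta>)
  then show ?case using seq_step.If by blast
qed simp_all

lemma seq_vars: "seq_step (c,s,m) os (c',s',m') \<Longrightarrow> used_vars c' \<subseteq> used_vars c \<and> (\<forall>y. y \<notin> used_vars c \<longrightarrow> s' y = s y)"
  by (induction rule: seq_step_induct) auto

lemma seq_equiv_both: "seq_equiv cfg1 cfg2 \<Longrightarrow> seq_step cfg1 o1 cfg1' \<Longrightarrow> seq_step cfg2 o2 cfg2' \<Longrightarrow>
  length o1 = length o2 \<Longrightarrow> o1 = o2 \<and> seq_equiv cfg1' cfg2'"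
proof -
  assume eq: "seq_equiv cfg1 cfg2" and s1: "seq_step cfg1 o1 cfg1'" and s2: "seq_step cfg2 o2 cfg2'"
    and l: "length o1 = length o2"
  have "prefix (o1 @ []) (o2 @ []) \<or> prefix (o2 @ []) (o1 @ [])"
    using eq s1 s2 unfolding seq_equiv_def by (meson seq_steps.intros)
  with l have oe: "o1 = o2" by (auto simp: prefix_def)
  show ?thesis
  proof (intro conjI oe)
    show "seq_equiv cfg1' cfg2'" unfolding seq_equiv_def
    proof (intro allI impI)
      fix O1 O2 c1 c2 assume "seq_steps cfg1' O1 c1" "seq_steps cfg2' O2 c2"
      then have "prefix (o1 @ O1) (o2 @ O2) \<or> prefix (o2 @ O2) (o1 @ O1)"
        using eq s1 s2 unfolding seq_equiv_def by (meson seq_steps.intros)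
      then show "prefix O1 O2 \<or> prefix O2 O1" using oe by auto
    qed
  qed
qed

lemma seq_equiv_left: "seq_equiv cfg1 cfg2 \<Longrightarrow> seq_step cfg1 [] cfg1' \<Longrightarrow> seq_equiv cfg1' cfg2"
  unfolding seq_equiv_def by (metis append_Nil seq_steps.intros)

lemma seq_equiv_right: "seq_equiv cfg1 cfg2 \<Longrightarrow> seq_step cfg2 [] cfg2' \<Longrightarrow> seq_equiv cfg1 cfg2'"
  unfolding seq_equiv_def by (metis append_Nil seq_steps.intros)

abbreviation Ab1 :: "bexp \<Rightarrow> com" where "Ab1 G \<equiv> Asgn bvar (ACTIf G (AId bvar) (ANum 1))"
abbreviation Ab2 :: "bexp \<Rightarrow> com" where "Ab2 G \<equiv> Asgn bvar (ACTIf G (ANum 1) (AId bvar))"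
abbreviation maskexp :: "vname \<Rightarrow> aexp" where "maskexp x \<equiv> ACTIf (b_eq 1) (ANum 0) (AId x)"
abbreviation maskc :: "vname \<Rightarrow> com" where "maskc x \<equiv> Asgn x (maskexp x)"

lemma beval_band[simp]: "beval s (band b1 b2) = (beval s b1 \<and> beval s b2)" by (simp add: band_def)
lemma beval_beq[simp]: "beval s (b_eq n) = (s bvar = n)" by (simp add: b_eq_def)
lemma aeval_mask[simp]: "aeval s (mask_idx i) = (if s bvar = 1 then 0 else aeval s i)" by (simp add: mask_idx_def)
lemma guard0: "s bvar = 0 \<Longrightarrow> beval s (guard P be) = beval s be" by (simp add: guard_def)

definition gd :: "(vname \<Rightarrow> label) \<Rightarrow> bexp \<Rightarrow> bool" where
  "gd P G = ((blabel P G \<and> bvar \<notin> bvars G) \<or> (\<exists>be. G = band (b_eq 0) be))"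
definition gi :: "(vname \<Rightarrow> label) \<Rightarrow> aexp \<Rightarrow> bool" where
  "gi P i = ((alabel P i \<and> bvar \<notin> avars i) \<or> (\<exists>i'. i = mask_idx i'))"

lemma gd_eval: "gd P G \<Longrightarrow> s1 bvar = 1 \<Longrightarrow> s2 bvar = 1 \<Longrightarrow> (\<forall>y. P y \<longrightarrow> y \<noteq> bvar \<longrightarrow> s1 y = s2 y)
  \<Longrightarrow> beval s1 G = beval s2 G"
  unfolding gd_def blabel_def apply (elim disjE exE)
   apply (rule eval_agree) apply blast
  apply simp done

lemma gi_eval: "gi P i \<Longrightarrow> s1 bvar = 1 \<Longrightarrow> s2 bvar = 1 \<Longrightarrow> (\<forall>y. P y \<longrightarrow> y \<noteq> bvar \<longrightarrow> s1 y = s2 y)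
  \<Longrightarrow> aeval s1 i = aeval s2 i"
  unfolding gi_def alabel_def apply (elim disjE exE)
   apply (rule eval_agree) apply blast
  apply simp done

fun asok :: "(vname \<Rightarrow> label) \<Rightarrow> (aname \<Rightarrow> label) \<Rightarrow> com \<Rightarrow> bool" where
  "asok P PA Skip = True"
| "asok P PA (Asgn x e) = (if x = bvar then (\<exists>G. e = ACTIf G (AId bvar) (ANum 1) \<or> e = ACTIf G (ANum 1) (AId bvar))
     else (P x \<longrightarrow> (alabel P e \<and> bvar \<notin> avars e) \<or> e = maskexp x))"
| "asok P PA (Seq t1 t2) = (asok P PA t1 \<and> asok P PA t2)"
| "asok P PA (If G t1 t2) = (asok P PA t1 \<and> asok P PA t2)"
| "asok P PA (While G t) = asok P PA t"
| "asok P PA (ARead x a i) = (x \<noteq> bvar \<and> (P x \<longrightarrow> PA a \<and> alabel P i))"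
| "asok P PA (AWrite a i e) = (PA a \<longrightarrow> alabel P i \<and> alabel P e)"

fun obsok :: "(vname \<Rightarrow> label) \<Rightarrow> com \<Rightarrow> bool" where
  "obsok P (Seq t1 t2) = (obsok P t1 \<and> obsok P t2)"
| "obsok P (If G t1 t2) = (gd P G \<and> obsok P t1 \<and> obsok P t2)"
| "obsok P (While G t) = (gd P G \<and> obsok P t)"
| "obsok P (ARead x a i) = gi P i"
| "obsok P (AWrite a i e) = gi P i"
| "obsok P _ = True"

fun rm :: "(vname \<Rightarrow> label) \<Rightarrow> com \<Rightarrow> bool" where
  "rm P (Seq (ARead x a i) t2) = ((P x \<longrightarrow> t2 = maskc x) \<and> rm P t2)"
| "rm P (Seq t1 t2) = (rm P t1 \<and> rm P t2)"
| "rm P (If G t1 t2) = (rm P t1 \<and> rm P t2)"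
| "rm P (While G t) = rm P t"
| "rm P (ARead x a i) = (\<not> P x)"
| "rm P _ = True"

lemma rm_Seq_I: "rm P t1 \<Longrightarrow> rm P t2 \<Longrightarrow> rm P (Seq t1 t2)"
  by (cases t1) auto
lemma rm_Seq_D2: "rm P (Seq t1 t2) \<Longrightarrow> rm P t2"
  by (cases t1) auto
lemma rm_Seq_D1: "rm P (Seq t1 t2) \<Longrightarrow> (\<forall>x a i. t1 \<noteq> ARead x a i) \<Longrightarrow> rm P t1"
  by (cases t1) auto
lemma rm_Skip: "rm P Skip" by simp

fun pm :: "com \<Rightarrow> vname set" where
  "pm (Asgn x e) = (if e = maskexp x then {x} else {})"
| "pm (Seq t1 t2) = (if t1 = Skip then pm t2 else pm t1)"
| "pm _ = {}"

definition E2 :: "(vname \<Rightarrow> label) \<Rightarrow> state \<Rightarrow> state \<Rightarrow> com \<Rightarrow> bool" where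
  "E2 P s1 s2 t = (\<forall>y. P y \<longrightarrow> y \<noteq> bvar \<longrightarrow> y \<notin> pm t \<longrightarrow> s1 y = s2 y)"

lemma asok_step: "spec_step (t,s,m,b) ds os (t',s',m',b') \<Longrightarrow> asok P PA t \<Longrightarrow> asok P PA t'"
  by (induction rule: spec_step_induct) auto
lemma obsok_step: "spec_step (t,s,m,b) ds os (t',s',m',b') \<Longrightarrow> obsok P t \<Longrightarrow> obsok P t'"
  by (induction rule: spec_step_induct) auto

lemma rm_step: "spec_step (t,s,m,b) ds os (t',s',m',b') \<Longrightarrow> rm P t \<Longrightarrow> rm P t'"
proof (induction rule: spec_step_induct)
  case (Seq c1 \<rho> \<mu> \<beta> ds os c1' \<rho>' \<mu>' \<beta>' c2)
  have r2: "rm P c2" using rm_Seq_D2[OF Seq.prems] .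
  show ?case
  proof (cases "\<exists>x a i. c1 = ARead x a i")
    case True
    then obtain x a i where c1: "c1 = ARead x a i" by blast
    with Seq.hyps have "c1' = Skip" by auto
    then show ?thesis using rm_Seq_I[OF rm_Skip r2] by simp
  next
    case False
    then have "rm P c1" using rm_Seq_D1[OF Seq.prems] by blast
    then show ?thesis using rm_Seq_I[OF Seq.IH r2] by simp
  qed
next
  case (SeqSkip c \<rho> \<mu> \<beta>) then show ?case using rm_Seq_D2 by blast
next
  case (While b c \<rho> \<mu> \<beta>) then show ?case using rm_Seq_I by simp
next
  case (If b c1 c2 \<rho> \<mu> \<beta>) then show ?case by simp
next
  case (IfForce b c1 c2 \<rho> \<mu> \<beta>) then show ?case by simp
qed simp_all

section \<open>Pending b-assignment\<close>

inductive pendB :: "state \<Rightarrow> com \<Rightarrow> bool" where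
  pb1: "\<not> beval s G \<Longrightarrow> pendB s (Ab1 G)"
| pb2: "beval s G \<Longrightarrow> pendB s (Ab2 G)"
| pb3: "pendB s r \<Longrightarrow> pendB s (Seq Skip r)"
| pb4: "pendB s t1 \<Longrightarrow> pendB s (Seq t1 t2)"

inductive_cases pendB_SkipE[elim!]: "pendB s Skip"
inductive_cases pendB_SeqE: "pendB s (Seq t1 t2)"
inductive_cases pendB_IfE[elim!]: "pendB s (If G t1 t2)"
inductive_cases pendB_WhileE[elim!]: "pendB s (While G t)"
inductive_cases pendB_ReadE[elim!]: "pendB s (ARead x a i)"
inductive_cases pendB_WriteE[elim!]: "pendB s (AWrite a i e)"
inductive_cases pendB_AsgnE: "pendB s (Asgn x e)"

lemma pendB_Asgn_b: "pendB s (Asgn x e) \<Longrightarrow> x = bvar"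
  by (erule pendB_AsgnE) auto

lemma pendB_Seq1: "pendB s (Seq t1 t2) \<Longrightarrow> t1 \<noteq> Skip \<Longrightarrow> pendB s t1"
  by (erule pendB_SeqE) auto

lemma pendB_pm: "pendB s t \<Longrightarrow> pm t = {}"
  by (induction rule: pendB.induct) auto

lemma pendB_step: "pendB s t \<Longrightarrow> spec_step (t,s,m,b) ds os (t',s',m',b') \<Longrightarrow> s bvar = 0 \<Longrightarrow>
  ds = [] \<and> os = [] \<and> m' = m \<and> b' = b \<and> (s' = s(bvar := 1) \<or> (s' = s \<and> pendB s' t'))"
proof (induction arbitrary: t' s' m' b' ds os rule: pendB.induct)
  case (pb3 s r)
  from specSeq_inv[OF pb3.prems(1)] show ?case
  proof (elim disjE exE conjE)
    fix c1' assume "spec_step (Skip, s, m, b) ds os (c1', s', m', b')" then show ?thesis by auto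
  next
    assume "t' = r" "ds = []" "os = []" "s' = s" "m' = m" "b' = b"
    then show ?thesis using pb3.hyps(1) by simp
  qed
next
  case (pb4 s t1 t2)
  from specSeq_inv[OF pb4.prems(1)] show ?case
  proof (elim disjE exE conjE)
    fix c1' assume a: "t' = Seq c1' t2" "spec_step (t1, s, m, b) ds os (c1', s', m', b')"
    then show ?thesis using pb4.IH[OF a(2) pb4.prems(2)] by (auto intro: pendB.pb4)
  next
    assume "t1 = Skip" then show ?thesis using pb4.hyps by auto
  qed
next
  case (pb1 s G)
  from pb1.prems(1) have "ds = [] \<and> os = [] \<and> m' = m \<and> b' = b \<and> s' = s(bvar := aeval s (ACTIf G (AId bvar) (ANum 1)))"
    by (elim specAsgnE) simp
  then show ?case using pb1.hyps by simp
next
  case (pb2 s G)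
  from pb2.prems(1) have "ds = [] \<and> os = [] \<and> m' = m \<and> b' = b \<and> s' = s(bvar := aeval s (ACTIf G (ANum 1) (AId bvar)))"
    by (elim specAsgnE) simp
  then show ?case using pb2.hyps by simp
qed

definition bok :: "state \<Rightarrow> com \<Rightarrow> bool" where
  "bok s t = (s bvar = 1 \<or> (s bvar = 0 \<and> pendB s t))"

lemma b1_step: "spec_step (t,s,m,b) ds os (t',s',m',b') \<Longrightarrow> asok P PA t \<Longrightarrow> s bvar = 1 \<Longrightarrow> s' bvar = 1"
  by (induction rule: spec_step_induct) (auto split: if_splits)

lemma bok_step: "spec_step (t,s,m,b) ds os (t',s',m',b') \<Longrightarrow> asok P PA t \<Longrightarrow> bok s t \<Longrightarrow> bok s' t'"
proof -
  assume st: "spec_step (t,s,m,b) ds os (t',s',m',b')" and a: "asok P PA t" and bk: "bok s t"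
  show "bok s' t'"
  proof (cases "s bvar = 1")
    case True then show ?thesis using b1_step[OF st a] bok_def by blast
  next
    case False
    then have "s bvar = 0" "pendB s t" using bk bok_def by auto
    then have "s' = s(bvar := 1) \<or> (s' = s \<and> pendB s' t')" using pendB_step st by blast
    then show ?thesis using \<open>s bvar = 0\<close> unfolding bok_def by auto
  qed
qed

lemma bok_Seq: "bok s (Seq t1 t2) \<Longrightarrow> t1 \<noteq> Skip \<Longrightarrow> bok s t1"
  unfolding bok_def using pendB_Seq1 by blast

lemma bok_1: "bok s t \<Longrightarrow> \<not> pendB s t \<Longrightarrow> s bvar = 1"
  unfolding bok_def by auto

lemma obs2: "spec_step (t,s1,m1,b1) ds os1 (t1',s1',m1',b1') \<Longrightarrow> spec_step (t,s2,m2,b2) ds os2 (t2',s2',m2',b2')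
  \<Longrightarrow> obsok P t \<Longrightarrow> bok s1 t \<Longrightarrow> bok s2 t \<Longrightarrow> E2 P s1 s2 t \<Longrightarrow> os1 = os2"
proof (induction arbitrary: s2 m2 b2 os2 t2' s2' m2' b2' rule: spec_step_induct)
  case (Seq c1 \<rho> \<mu> \<beta> ds os c1' \<rho>' \<mu>' \<beta>' c2)
  have ne: "c1 \<noteq> Skip" using Seq.hyps by auto
  from specSeq_inv[OF Seq.prems(1)] show ?case
  proof (elim disjE exE conjE)
    fix c1'' assume a: "t2' = Seq c1'' c2" "spec_step (c1, s2, m2, b2) ds os2 (c1'', s2', m2', b2')"
    show ?thesis
      apply (rule Seq.IH[OF a(2)])
      using Seq.prems ne bok_Seq by (auto simp: E2_def)
  next
    assume "c1 = Skip" then show ?thesis using ne by auto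
  qed
next
  case (If b c1 c2 \<rho> \<mu> \<beta>)
  have "s2 bvar = 1" "\<rho> bvar = 1" using If bok_1 by blast+
  then show ?case using If gd_eval[of P b \<rho> s2] by (auto simp: E2_def)
next
  case (IfForce b c1 c2 \<rho> \<mu> \<beta>)
  have "s2 bvar = 1" "\<rho> bvar = 1" using IfForce bok_1 by blast+
  then show ?case using IfForce gd_eval[of P b \<rho> s2] by (auto simp: E2_def)
next
  case (ARead \<rho> ie i \<mu> a x \<beta>)
  have "s2 bvar = 1" "\<rho> bvar = 1" using ARead bok_1 by blast+
  then show ?case using ARead gi_eval[of P ie \<rho> s2] by (auto simp: E2_def)
next
  case (ALoad \<rho> ie i \<mu> a j a' x)
  have "s2 bvar = 1" "\<rho> bvar = 1" using ALoad bok_1 by blast+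
  then show ?case using ALoad gi_eval[of P ie \<rho> s2] by (auto simp: E2_def)
next
  case (AWrite \<rho> ie i \<mu> a e \<beta>)
  have "s2 bvar = 1" "\<rho> bvar = 1" using AWrite bok_1 by blast+
  then show ?case using AWrite gi_eval[of P ie \<rho> s2] by (auto simp: E2_def)
next
  case (AStore \<rho> ie i \<mu> a j a' e)
  have "s2 bvar = 1" "\<rho> bvar = 1" using AStore bok_1 by blast+
  then show ?case using AStore gi_eval[of P ie \<rho> s2] by (auto simp: E2_def)
qed auto

declare One_nat_def[simp del]

section \<open>Simulation for phase 1\<close>

inductive sim :: "(vname \<Rightarrow> label) \<Rightarrow> state \<Rightarrow> com \<Rightarrow> com \<Rightarrow> bool" for P where
  sSkip: "sim P s Skip Skip"
| sAsgn: "sim P s (Asgn x e) (Asgn x e)"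
| sIf: "sim P s (fvslh P (If be c1 c2)) (If be c1 c2)"
| sWhile: "sim P s (fvslh P (While be c)) (While be c)"
| sRead: "sim P s (fvslh P (ARead x a i)) (ARead x a i)"
| sWrite: "sim P s (fvslh P (AWrite a i e)) (AWrite a i e)"
| sAb1: "beval s G \<Longrightarrow> sim P s t c \<Longrightarrow> sim P s (Seq (Ab1 G) t) c"
| sAb2: "\<not> beval s G \<Longrightarrow> sim P s t c \<Longrightarrow> sim P s (Seq (Ab2 G) t) c"
| sSkipL: "sim P s t c \<Longrightarrow> sim P s (Seq Skip t) c"
| sSeq: "sim P s t1 c1 \<Longrightarrow> sim P s (Seq t1 (fvslh P c2)) (Seq c1 c2)"
| sW1: "sim P s (Seq (If (guard P be) (Seq (Seq (Ab1 (guard P be)) (fvslh P c))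
          (While (guard P be) (Seq (Ab1 (guard P be)) (fvslh P c)))) Skip) (Ab2 (guard P be)))
        (If be (Seq c (While be c)) Skip)"
| sW2: "sim P s t c1 \<Longrightarrow> sim P s (Seq (Seq t (While (guard P be) (Seq (Ab1 (guard P be)) (fvslh P c)))) (Ab2 (guard P be)))
        (Seq c1 (While be c))"
| sAb2e: "\<not> beval s G \<Longrightarrow> sim P s (Ab2 G) Skip"
| sMask: "sim P s (maskc x) Skip"

lemma sim_T: "sim P s (fvslh P c) c"
proof (induction c)
  case Skip show ?case using sim.sSkip[of P s] by simp
next
  case (Asgn x e) show ?case using sim.sAsgn[of P s x e] by simp
next
  case (Seq c1 c2) show ?case using sim.sSeq[OF Seq.IH(1), of c2] by simp
next
  case (If be c1 c2) show ?case by (rule sim.sIf)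
next
  case (While be c) show ?case by (rule sim.sWhile)
next
  case (ARead x a i) show ?case by (rule sim.sRead)
next
  case (AWrite a i e) show ?case by (rule sim.sWrite)
qed

lemma sim_Skip_inv: "sim P s Skip c \<Longrightarrow> c = Skip"
  by (erule sim.cases) (auto split: if_splits)

lemma R_: "seq_step (c,s,m) ob (c',s',m') \<Longrightarrow> sim P s' t' c' \<Longrightarrow> A \<or> (\<exists>c'. seq_step (c,s,m) ob (c',s',m') \<and> sim P s' t' c')"
  by blast
lemma L_: "sim P s t' c \<Longrightarrow> ([] = [] \<and> s = s \<and> m = m \<and> sim P s t' c) \<or> B"
  by blast

lemma sim_step:
  assumes "sim P s t c" "seq_step (t,s,m) ob (t',s',m')" "s bvar = 0" "bvar \<notin> used_vars c"
  shows "(ob = [] \<and> s' = s \<and> m' = m \<and> sim P s' t' c) \<or> (\<exists>c'. seq_step (c,s,m) ob (c',s',m') \<and> sim P s' t' c')"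
  using assms
proof (induction arbitrary: ob t' s' m' rule: sim.induct)
  case (sSkip s) then show ?case by auto
next
  case (sAsgn s x e)
  from sAsgn.prems(1) have eq: "ob = []" "t' = Skip" "s' = s(x := aeval s e)" "m' = m" by auto
  show ?case unfolding eq by (rule R_[OF seq_step.Asgn sim.sSkip])
next
  case (sIf s be c1 c2)
  have g: "beval s (guard P be) = beval s be" using guard0 sIf.prems(2) by blast
  from sIf.prems(1) have st: "seq_step (If (guard P be) (Seq (Ab1 (guard P be)) (fvslh P c1)) (Seq (Ab2 (guard P be)) (fvslh P c2)), s, m) ob (t',s',m')"
    by simp
  then have eq: "ob = [OBranch (beval s be)]" "t' = (if beval s be then Seq (Ab1 (guard P be)) (fvslh P c1) else Seq (Ab2 (guard P be)) (fvslh P c2))" "s' = s" "m' = m"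
    using g by auto
  have sm: "sim P s (if beval s be then Seq (Ab1 (guard P be)) (fvslh P c1) else Seq (Ab2 (guard P be)) (fvslh P c2)) (if beval s be then c1 else c2)"
  proof (cases "beval s be")
    case True then show ?thesis using sim.sAb1[of s "guard P be" P "fvslh P c1" c1, OF _ sim_T] g by simp
  next
    case False then show ?thesis using sim.sAb2[of s "guard P be" P "fvslh P c2" c2, OF _ sim_T] g by simp
  qed
  show ?case unfolding eq by (rule R_[OF seq_step.If sm])
next
  case (sWhile s be c)
  from sWhile.prems(1) have st: "seq_step (Seq (While (guard P be) (Seq (Ab1 (guard P be)) (fvslh P c))) (Ab2 (guard P be)), s, m) ob (t',s',m')"
    by simp
  then have eq: "ob = []" "t' = Seq (If (guard P be) (Seq (Seq (Ab1 (guard P be)) (fvslh P c))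
          (While (guard P be) (Seq (Ab1 (guard P be)) (fvslh P c)))) Skip) (Ab2 (guard P be))" "s' = s" "m' = m"
    by (auto elim: seqSeqE)
  show ?case unfolding eq by (rule R_[OF seq_step.While sim.sW1])
next
  case (sRead s x a i)
  show ?case
  proof (cases "P x \<and> alabel P i")
    case True
    with sRead.prems(1) have st: "seq_step (Seq (ARead x a i) (maskc x), s, m) ob (t',s',m')" by simp
    then obtain j where eq: "ob = [ORead a j]" "t' = Seq Skip (maskc x)" "s' = s(x := m a ! j)" "m' = m" and j: "aeval s i = j" "j < length (m a)"
      by (auto elim: seqSeqE)
    show ?thesis unfolding eq by (rule R_[OF seq_step.ARead[of s i j m a x, OF j] sim.sSkipL[OF sim.sMask]])
  next
    case False
    define ie where "ie = (if \<not> alabel P i then mask_idx i else i)"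
    have f: "fvslh P (ARead x a i) = ARead x a ie" using False by (simp add: ie_def)
    have ev: "aeval s ie = aeval s i" using sRead.prems(2) by (simp add: ie_def)
    from sRead.prems(1) f have "seq_step (ARead x a ie, s, m) ob (t',s',m')" by simp
    then obtain j where eq: "ob = [ORead a j]" "t' = Skip" "s' = s(x := m a ! j)" "m' = m" and j: "aeval s i = j" "j < length (m a)"
      using ev by (elim seqReadE) auto
    show ?thesis unfolding eq by (rule R_[OF seq_step.ARead[of s i j m a x, OF j] sim.sSkip])
  qed
next
  case (sWrite s a i e)
  define ie where "ie = (if \<not> alabel P i then mask_idx i else i)"
  have f: "fvslh P (AWrite a i e) = AWrite a ie e" by (simp add: ie_def)
  have ev: "aeval s ie = aeval s i" using sWrite.prems(2) by (simp add: ie_def)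
  from sWrite.prems(1) f have "seq_step (AWrite a ie e, s, m) ob (t',s',m')" by simp
  then obtain j where eq: "ob = [OWrite a j]" "t' = Skip" "s' = s" "m' = m(a := (m a)[j := aeval s e])" and j: "aeval s i = j" "j < length (m a)"
    using ev by (elim seqWriteE) auto
  show ?case unfolding eq by (rule R_[OF seq_step.AWrite[of s i j m a e, OF j] sim.sSkip])
next
  case (sAb1 s G t c)
  from sAb1.prems(1) have eq: "ob = []" "t' = Seq Skip t" "s' = s" "m' = m"
    using sAb1.hyps(1) by (auto elim!: seqSeqE)
  show ?case unfolding eq by (rule L_[OF sim.sSkipL[OF sAb1.hyps(2)]])
next
  case (sAb2 s G t c)
  from sAb2.prems(1) have eq: "ob = []" "t' = Seq Skip t" "s' = s" "m' = m"
    using sAb2.hyps(1) by (auto elim!: seqSeqE)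
  show ?case unfolding eq by (rule L_[OF sim.sSkipL[OF sAb2.hyps(2)]])
next
  case (sSkipL s t c)
  from sSkipL.prems(1) have eq: "ob = []" "t' = t" "s' = s" "m' = m" by (auto elim!: seqSeqE)
  show ?case unfolding eq by (rule L_[OF sSkipL.hyps(1)])
next
  case (sSeq s t1 c1 c2)
  from seqSeq_inv[OF sSeq.prems(1)] show ?case
  proof (elim disjE exE conjE)
    fix t1' assume 1: "t' = Seq t1' (fvslh P c2)" "seq_step (t1, s, m) ob (t1', s', m')"
    have IH: "(ob = [] \<and> s' = s \<and> m' = m \<and> sim P s' t1' c1) \<or> (\<exists>c'. seq_step (c1,s,m) ob (c',s',m') \<and> sim P s' t1' c')"
      using sSeq.IH[OF 1(2)] sSeq.prems by auto
    then show ?thesis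
    proof
      assume "ob = [] \<and> s' = s \<and> m' = m \<and> sim P s' t1' c1"
      then show ?thesis using 1(1) sim.sSeq[of P s' t1' c1 c2] by auto
    next
      assume "\<exists>c'. seq_step (c1,s,m) ob (c',s',m') \<and> sim P s' t1' c'"
      then obtain c' where a: "seq_step (c1,s,m) ob (c',s',m')" "sim P s' t1' c'" by blast
      show ?thesis unfolding 1(1) by (rule R_[OF seq_step.Seq[OF a(1)] sim.sSeq[OF a(2)]])
    qed
  next
    assume 2: "t1 = Skip" "t' = fvslh P c2" "ob = []" "s' = s" "m' = m"
    then have c1s: "c1 = Skip" using sSeq.hyps sim_Skip_inv by blast
    show ?thesis unfolding 2(2-5) c1s by (rule R_[OF seq_step.SeqSkip sim_T])
  qed
next
  case (sW1 s be c)
  have g: "beval s (guard P be) = beval s be" using guard0 sW1.prems(2) by blast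
  let ?B = "Seq (Ab1 (guard P be)) (fvslh P c)"
  let ?W = "While (guard P be) ?B"
  from sW1.prems(1) have eq: "ob = [OBranch (beval s be)]" "t' = Seq (if beval s be then Seq ?B ?W else Skip) (Ab2 (guard P be))" "s' = s" "m' = m"
    using g by (auto elim!: seqSeqE)
  have sm: "sim P s (Seq (if beval s be then Seq ?B ?W else Skip) (Ab2 (guard P be))) (if beval s be then Seq c (While be c) else Skip)"
  proof (cases "beval s be")
    case True
    then have "sim P s ?B c" using g sim.sAb1[of s "guard P be" P "fvslh P c" c, OF _ sim_T] by simp
    then show ?thesis using True sim.sW2[of P s ?B c be c] by auto
  next
    case False
    then show ?thesis using g sim.sSkipL[OF sim.sAb2e[of s "guard P be" P]] by auto
  qed
  show ?case unfolding eq by (rule R_[OF seq_step.If sm])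
next
  case (sW2 s t c1 be c)
  let ?B = "Seq (Ab1 (guard P be)) (fvslh P c)"
  let ?W = "While (guard P be) ?B"
  obtain u where u: "seq_step (Seq t ?W, s, m) ob (u, s', m')" "t' = Seq u (Ab2 (guard P be))"
    using seqSeq_inv[OF sW2.prems(1)] by blast
  from seqSeq_inv[OF u(1)] show ?case
  proof (elim disjE exE conjE)
    fix t1' assume 1: "u = Seq t1' ?W" "seq_step (t, s, m) ob (t1', s', m')"
    have IH: "(ob = [] \<and> s' = s \<and> m' = m \<and> sim P s' t1' c1) \<or> (\<exists>c'. seq_step (c1,s,m) ob (c',s',m') \<and> sim P s' t1' c')"
      using sW2.IH[OF 1(2)] sW2.prems by auto
    then show ?thesis
    proof
      assume "ob = [] \<and> s' = s \<and> m' = m \<and> sim P s' t1' c1"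
      then show ?thesis using 1(1) u(2) sim.sW2[of P s' t1' c1 be c] by auto
    next
      assume "\<exists>c'. seq_step (c1,s,m) ob (c',s',m') \<and> sim P s' t1' c'"
      then obtain c' where a: "seq_step (c1,s,m) ob (c',s',m')" "sim P s' t1' c'" by blast
      show ?thesis unfolding u(2) 1(1) by (rule R_[OF seq_step.Seq[OF a(1)] sim.sW2[OF a(2)]])
    qed
  next
    assume 2: "t = Skip" "u = ?W" "ob = []" "s' = s" "m' = m"
    then have c1s: "c1 = Skip" using sW2.hyps sim_Skip_inv by blast
    have sm: "sim P s (Seq ?W (Ab2 (guard P be))) (While be c)" using sim_T[of P s "While be c"] by simp
    show ?thesis unfolding u(2) 2(2-5) c1s by (rule R_[OF seq_step.SeqSkip sm])
  qed
next
  case (sAb2e s G)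
  from sAb2e.prems(1) have eq: "ob = []" "t' = Skip" "s' = s" "m' = m" using sAb2e.hyps by auto
  show ?case unfolding eq by (rule L_[OF sim.sSkip])
next
  case (sMask s x)
  from sMask.prems(1) have eq: "ob = []" "t' = Skip" "s' = s" "m' = m" using sMask.prems(2) by auto
  show ?case unfolding eq by (rule L_[OF sim.sSkip])
qed

lemma pb1': "\<not> beval s G \<Longrightarrow> pendB s (Asgn bvar (ACTIf G (AId bvar) (ANum (Suc 0))))"
  using pendB.pb1[of s G] by (simp add: One_nat_def)
lemma pb2': "beval s G \<Longrightarrow> pendB s (Asgn bvar (ACTIf G (ANum (Suc 0)) (AId bvar)))"
  using pendB.pb2[of s G] by (simp add: One_nat_def)

lemma sim_force: "sim P s t c \<Longrightarrow> spec_step (t,s,m,b) ds os (t',s',m',b') \<Longrightarrow> ds = [DForce] \<Longrightarrow> pendB s t'"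
proof (induction arbitrary: t' s' m' b' ds os rule: sim.induct)
  case (sIf s be c1 c2)
  then have "t' = (if \<not> beval s (guard P be) then Seq (Ab1 (guard P be)) (fvslh P c1) else Seq (Ab2 (guard P be)) (fvslh P c2))"
    by auto
  then show ?case
    by (cases "beval s (guard P be)") (simp_all add: pendB.pb4[OF pendB.pb1] pendB.pb4[OF pendB.pb2])
next
  case (sWhile s be c)
  then show ?case by (auto elim!: specSeqE)
next
  case (sRead s x a i)
  then show ?case by (auto elim!: specSeqE split: if_splits)
next
  case (sWrite s a i e)
  then show ?case by (auto split: if_splits)
next
  case (sAb1 s G t c)
  then show ?case by (auto elim!: specSeqE)
next
  case (sAb2 s G t c)
  then show ?case by (auto elim!: specSeqE)
next
  case (sSkipL s t c)
  then show ?case by (auto elim!: specSeqE)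
next
  case (sSeq s t1 c1 c2)
  from specSeq_inv[OF sSeq.prems(1)] show ?case
  proof (elim disjE exE conjE)
    fix c1' assume a: "t' = Seq c1' (fvslh P c2)" "spec_step (t1, s, m, b) ds os (c1', s', m', b')"
    show ?thesis unfolding a(1) by (rule pendB.pb4[OF sSeq.IH[OF a(2) sSeq.prems(2)]])
  next
    assume "ds = []" then show ?thesis using sSeq.prems(2) by simp
  qed
next
  case (sW1 s be c)
  let ?B = "Seq (Ab1 (guard P be)) (fvslh P c)"
  let ?W = "While (guard P be) ?B"
  from sW1 have "t' = Seq (if \<not> beval s (guard P be) then Seq ?B ?W else Skip) (Ab2 (guard P be))"
    by (auto elim!: specSeqE)
  then show ?case
    by (cases "beval s (guard P be)") (simp_all add: pendB.pb4[OF pendB.pb4[OF pendB.pb4[OF pendB.pb1]]] pendB.pb3[OF pendB.pb2])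
next
  case (sW2 s t c1 be c)
  obtain u where u: "spec_step (Seq t (While (guard P be) (Seq (Ab1 (guard P be)) (fvslh P c))), s, m, b) ds os (u, s', m', b')"
     "t' = Seq u (Ab2 (guard P be))"
    using specSeq_inv[OF sW2.prems(1)] sW2.prems(2) by auto
  from specSeq_inv[OF u(1)] show ?case
  proof (elim disjE exE conjE)
    fix c1' assume a: "u = Seq c1' (While (guard P be) (Seq (Ab1 (guard P be)) (fvslh P c)))" "spec_step (t, s, m, b) ds os (c1', s', m', b')"
    show ?thesis unfolding u(2) a(1) by (rule pendB.pb4[OF pendB.pb4[OF sW2.IH[OF a(2) sW2.prems(2)]]])
  next
    assume "ds = []" then show ?thesis using sW2.prems(2) by simp
  qed
qed auto

lemma pub_aeval: "pub_equiv P s1 s2 \<Longrightarrow> alabel P e \<Longrightarrow> aeval s1 e = aeval s2 e"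
  unfolding pub_equiv_def alabel_def by (auto intro: eval_agree)

lemma pe1: "seq_step (t,s1,m1) o1 (t1',s1',m1') \<Longrightarrow> seq_step (t,s2,m2) o2 (t2',s2',m2') \<Longrightarrow>
  asok P PA t \<Longrightarrow> pub_equiv P s1 s2 \<Longrightarrow> pub_equiv_mem PA m1 m2 \<Longrightarrow> s1 bvar = 0 \<Longrightarrow> s2 bvar = 0 \<Longrightarrow>
  s1' bvar = 0 \<Longrightarrow> s2' bvar = 0 \<Longrightarrow> pub_equiv P s1' s2' \<and> pub_equiv_mem PA m1' m2'"
proof (induction arbitrary: o2 t2' s2' m2' rule: seq_step_induct)
  case (Asgn x e \<rho> \<mu>)
  from Asgn.prems(1) have eq: "s2' = s2(x := aeval s2 e)" "m2' = m2" by auto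
  have "pub_equiv P (\<rho>(x := aeval \<rho> e)) s2'"
    unfolding pub_equiv_def
  proof (intro allI impI)
    fix y assume py: "P y"
    show "(\<rho>(x := aeval \<rho> e)) y = s2' y"
    proof (cases "y = x")
      case False then show ?thesis using py Asgn.prems(3) eq unfolding pub_equiv_def by auto
    next
      case True
      show ?thesis
      proof (cases "x = bvar")
        case True then show ?thesis using \<open>y = x\<close> Asgn.prems by auto
      next
        case False
        then have "alabel P e \<or> e = maskexp x" using Asgn.prems(2) py True by auto
        then show ?thesis
        proof
          assume "alabel P e" then show ?thesis using pub_aeval[OF Asgn.prems(3)] True eq by simp
        next
          assume "e = maskexp x" then show ?thesis using True eq Asgn.prems py unfolding pub_equiv_def by simp
        qed
      qed
    qed
  qed
  then show ?case using Asgn.prems(4) unfolding eq by blast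
next
  case (Seq c1 \<rho> \<mu> os c1' \<rho>' \<mu>' c2)
  from seqSeq_inv[OF Seq.prems(1)] show ?case
  proof (elim disjE exE conjE)
    fix c1'' assume a: "t2' = Seq c1'' c2" "seq_step (c1, s2, m2) o2 (c1'', s2', m2')"
    show ?thesis by (rule Seq.IH[OF a(2)]) (use Seq.prems in auto)
  next
    assume "c1 = Skip" then show ?thesis using Seq.hyps by auto
  qed
next
  case (SeqSkip c \<rho> \<mu>)
  from seqSeq_inv[OF SeqSkip.prems(1)] show ?case using SeqSkip.prems by auto
next
  case (If b c1 c2 \<rho> \<mu>)
  then show ?case by auto
next
  case (While b c \<rho> \<mu>)
  then show ?case by auto
next
  case (ARead \<rho> ie i \<mu> a x)
  from ARead.prems(1) obtain i2 where eq: "s2' = s2(x := m2 a ! i2)" "m2' = m2" "aeval s2 ie = i2" by auto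
  have "pub_equiv P (\<rho>(x := \<mu> a ! i)) s2'"
    unfolding pub_equiv_def
  proof (intro allI impI)
    fix y assume py: "P y"
    show "(\<rho>(x := \<mu> a ! i)) y = s2' y"
    proof (cases "y = x")
      case False then show ?thesis using py ARead.prems(3) eq unfolding pub_equiv_def by auto
    next
      case True
      then have "PA a" "alabel P ie" using ARead.prems(2) py by auto
      then have "\<mu> a = m2 a" "i = i2" using ARead.prems(4) pub_aeval[OF ARead.prems(3)] ARead.hyps eq
        unfolding pub_equiv_mem_def by auto
      then show ?thesis using True eq by simp
    qed
  qed
  then show ?case using ARead.prems(4) unfolding eq by blast
next
  case (AWrite \<rho> ie i \<mu> a e)
  from AWrite.prems(1) obtain i2 where eq: "s2' = s2" "m2' = m2(a := (m2 a)[i2 := aeval s2 e])" "aeval s2 ie = i2" by auto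
  have "pub_equiv_mem PA (\<mu>(a := (\<mu> a)[i := aeval \<rho> e])) m2'"
    unfolding pub_equiv_mem_def
  proof (intro allI impI)
    fix a' assume pa: "PA a'"
    show "(\<mu>(a := (\<mu> a)[i := aeval \<rho> e])) a' = m2' a'"
    proof (cases "a' = a")
      case False then show ?thesis using pa AWrite.prems(4) eq unfolding pub_equiv_mem_def by auto
    next
      case True
      then have "alabel P ie" "alabel P e" using AWrite.prems(2) pa by auto
      then have "\<mu> a = m2 a" "i = i2" "aeval \<rho> e = aeval s2 e"
        using AWrite.prems(4) pub_aeval[OF AWrite.prems(3)] AWrite.hyps eq pa True
        unfolding pub_equiv_mem_def by auto
      then show ?thesis using True eq by simp
    qed
  qed
  then show ?case using AWrite.prems(3) unfolding eq by blast
qed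

lemma E_step: "spec_step (t,s1,m1,b1) ds os1 (t1',s1',m1',b1') \<Longrightarrow> spec_step (t,s2,m2,b2) ds os2 (t2',s2',m2',b2')
  \<Longrightarrow> t1' = t2' \<Longrightarrow> asok P PA t \<Longrightarrow> rm P t \<Longrightarrow> bok s1 t \<Longrightarrow> bok s2 t \<Longrightarrow> E2 P s1 s2 t \<Longrightarrow> E2 P s1' s2' t1'"
proof (induction arbitrary: s2 m2 b2 os2 t2' s2' m2' b2' rule: spec_step_induct)
  case (Asgn x e \<rho> \<mu> \<beta>)
  from Asgn.prems(1) have eq: "s2' = s2(x := aeval s2 e)" by auto
  show ?case unfolding E2_def
  proof (intro allI impI)
    fix y assume py: "P y" and yb: "y \<noteq> bvar" and yp: "y \<notin> pm Skip"
    show "(\<rho>(x := aeval \<rho> e)) y = s2' y"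
    proof (cases "y = x")
      case False
      then have "y \<notin> pm (Asgn x e)" by auto
      then show ?thesis using py yb False Asgn.prems(7) eq unfolding E2_def by auto
    next
      case True
      have np: "\<not> pendB s (Asgn x e)" for s using pendB_Asgn_b True yb by blast
      have b1: "\<rho> bvar = 1" "s2 bvar = 1" using Asgn.prems(5,6) np bok_1 by blast+
      show ?thesis
      proof (cases "e = maskexp x")
        case True then show ?thesis using b1 eq \<open>y = x\<close> by simp
      next
        case False
        then have "alabel P e \<and> bvar \<notin> avars e" using Asgn.prems(3) py \<open>y = x\<close> yb by auto
        moreover have "pm (Asgn x e) = {}" using False by simp
        ultimately have "aeval \<rho> e = aeval s2 e"
          using Asgn.prems(7) unfolding E2_def alabel_def by (auto intro!: eval_agree)
        then show ?thesis using eq True by simp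
      qed
    qed
  qed
next
  case (Seq c1 \<rho> \<mu> \<beta> ds os c1' \<rho>' \<mu>' \<beta>' c2)
  have ne: "c1 \<noteq> Skip" using Seq.hyps by auto
  from specSeq_inv[OF Seq.prems(1)] show ?case
  proof (elim disjE exE conjE)
    fix c1'' assume a: "t2' = Seq c1'' c2" "spec_step (c1, s2, m2, b2) ds os2 (c1'', s2', m2', b2')"
    have c1e: "c1' = c1''" using Seq.prems(2) a(1) by simp
    show ?thesis
    proof (cases "\<exists>x a i. c1 = ARead x a i \<and> P x")
      case True
      then obtain x a i where c1: "c1 = ARead x a i" "P x" by blast
      then have c2: "c2 = maskc x" using Seq.prems(4) by simp
      from Seq.hyps c1 obtain v1 where h1: "c1' = Skip" "\<rho>' = \<rho>(x := v1)" by auto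
      from a(2) c1 obtain v2 where h2: "s2' = s2(x := v2)" by auto
      have "pm (Seq c1 c2) = {}" using c1 by simp
      then show ?thesis using Seq.prems(7) h1 h2 c2 unfolding E2_def by auto
    next
      case False
      then have r1: "rm P c1" using rm_Seq_D1[OF Seq.prems(4)] by (cases c1) auto
      have E1: "E2 P \<rho> s2 c1" using Seq.prems(7) ne unfolding E2_def by simp
      have "E2 P \<rho>' s2' c1'"
        by (rule Seq.IH[OF a(2) c1e]) (use Seq.prems r1 E1 ne bok_Seq in auto)
      then show ?thesis unfolding E2_def by (auto split: if_splits)
    qed
  next
    assume "c1 = Skip" then show ?thesis using ne by simp
  qed
next
  case (SeqSkip c \<rho> \<mu> \<beta>)
  from specSeq_inv[OF SeqSkip.prems(1)] have "s2' = s2" by auto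
  then show ?case using SeqSkip.prems(7) unfolding E2_def by simp
next
  case (If b c1 c2 \<rho> \<mu> \<beta>)
  then show ?case unfolding E2_def by auto
next
  case (IfForce b c1 c2 \<rho> \<mu> \<beta>)
  then show ?case unfolding E2_def by auto
next
  case (While b c \<rho> \<mu> \<beta>)
  then show ?case unfolding E2_def by auto
next
  case (ARead \<rho> ie i \<mu> a x \<beta>)
  from ARead.prems(1) obtain v where "s2' = s2(x := v)" by auto
  moreover have "\<not> P x" using ARead.prems(4) by simp
  ultimately show ?case using ARead.prems(7) unfolding E2_def by auto
next
  case (ALoad \<rho> ie i \<mu> a j a' x)
  from ALoad.prems(1) obtain v where "s2' = s2(x := v)" by auto
  moreover have "\<not> P x" using ALoad.prems(4) by simp
  ultimately show ?case using ALoad.prems(7) unfolding E2_def by auto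
next
  case (AWrite \<rho> ie i \<mu> a e \<beta>)
  from AWrite.prems(1) have "s2' = s2" by auto
  then show ?case using AWrite.prems(7) unfolding E2_def by auto
next
  case (AStore \<rho> ie i \<mu> a j a' e)
  from AStore.prems(1) have "s2' = s2" by auto
  then show ?case using AStore.prems(7) unfolding E2_def by auto
qed

lemma init_ok: "well_typed P PA pc c \<Longrightarrow> bvar \<notin> used_vars c \<Longrightarrow>
  asok P PA (fvslh P c) \<and> obsok P (fvslh P c) \<and> rm P (fvslh P c)"
proof (induction rule: well_typed.induct)
  case (Seq P PA pc c1 c2)
  then show ?case using rm_Seq_I by auto
next
  case (If P PA pc b c1 c2)
  then show ?case by (auto simp: gd_def guard_def blabel_def)
next
  case (While P PA pc b c)
  then show ?case by (auto simp: gd_def guard_def blabel_def)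
next
  case (ARead P pc i PA a x)
  then show ?case by (auto simp: label_le_def join_def gi_def)
next
  case (AWrite P pc i e PA a)
  then show ?case by (auto simp: label_le_def join_def gi_def)
qed (auto simp: label_le_def join_def)

definition J1 :: "(vname \<Rightarrow> label) \<Rightarrow> (aname \<Rightarrow> label) \<Rightarrow> com \<Rightarrow> state \<Rightarrow> mem \<Rightarrow> state \<Rightarrow> mem \<Rightarrow> bool" where
  "J1 P PA t s1 m1 s2 m2 = (asok P PA t \<and> obsok P t \<and> rm P t \<and> s1 bvar = 0 \<and> s2 bvar = 0 \<and>
     pub_equiv P s1 s2 \<and> pub_equiv_mem PA m1 m2 \<and>
     (\<exists>c1 c2. sim P s1 t c1 \<and> sim P s2 t c2 \<and> bvar \<notin> used_vars c1 \<and> bvar \<notin> used_vars c2 \<and>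
        seq_equiv (c1,s1,m1) (c2,s2,m2)))"

definition J2 :: "(vname \<Rightarrow> label) \<Rightarrow> (aname \<Rightarrow> label) \<Rightarrow> com \<Rightarrow> state \<Rightarrow> state \<Rightarrow> bool" where
  "J2 P PA t s1 s2 = (asok P PA t \<and> obsok P t \<and> rm P t \<and> bok s1 t \<and> bok s2 t \<and> E2 P s1 s2 t)"

fun Jinv :: "(vname \<Rightarrow> label) \<Rightarrow> (aname \<Rightarrow> label) \<Rightarrow> com \<times> state \<times> mem \<times> bool \<Rightarrow> com \<times> state \<times> mem \<times> bool \<Rightarrow> bool" where
  "Jinv P PA (t1,s1,m1,b1) (t2,s2,m2,b2) = (t1 = t2 \<and>
     ((\<not> b1 \<and> \<not> b2 \<and> J1 P PA t1 s1 m1 s2 m2) \<or> (b1 \<and> b2 \<and> J2 P PA t1 s1 s2)))"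

lemma joint2:
  assumes J: "J2 P PA t s1 s2"
    and st1: "spec_step (t,s1,m1,True) ds os1 (t1',s1',m1',b1')"
    and st2: "spec_step (t,s2,m2,True) ds os2 (t2',s2',m2',b2')"
  shows "os1 = os2 \<and> Jinv P PA (t1',s1',m1',b1') (t2',s2',m2',b2')"
proof -
  have a: "asok P PA t" "obsok P t" "rm P t" "bok s1 t" "bok s2 t" "E2 P s1 s2 t" using J unfolding J2_def by auto
  have oe: "os1 = os2" by (rule obs2[OF st1 st2 a(2) a(4) a(5) a(6)])
  have st2': "spec_step (t,s2,m2,True) ds os1 (t2',s2',m2',b2')" using st2 oe by simp
  have te: "t1' = t2'" by (rule spec_det[OF st1 st2'])
  have bb: "b1'" "b2'" using spec_beta[OF st1] spec_beta[OF st2] by auto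
  have "J2 P PA t1' s1' s2'" unfolding J2_def
    using asok_step[OF st1 a(1)] obsok_step[OF st1 a(2)] rm_step[OF st1 a(3)]
      bok_step[OF st1 a(1) a(4)] bok_step[OF st2 a(1) a(5)] E_step[OF st1 st2 te a(1) a(3) a(4) a(5) a(6)] te
    by simp
  then show ?thesis using oe te bb by simp
qed

lemma joint1:
  assumes J: "J1 P PA t s1 m1 s2 m2"
    and st1: "spec_step (t,s1,m1,False) ds os1 (t1',s1',m1',b1')"
    and st2: "spec_step (t,s2,m2,False) ds os2 (t2',s2',m2',b2')"
  shows "os1 = os2 \<and> Jinv P PA (t1',s1',m1',b1') (t2',s2',m2',b2')"
proof -
  from J obtain c1 c2 where sim1: "sim P s1 t c1" and sim2: "sim P s2 t c2"
    and u1: "bvar \<notin> used_vars c1" and u2: "bvar \<notin> used_vars c2"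
    and se: "seq_equiv (c1,s1,m1) (c2,s2,m2)"
    and a: "asok P PA t" "obsok P t" "rm P t" and b: "s1 bvar = 0" "s2 bvar = 0"
    and pe: "pub_equiv P s1 s2" "pub_equiv_mem PA m1 m2"
    unfolding J1_def by blast
  have l1: "length os1 = length ds" "length os2 = length ds" using spec_len[OF st1] spec_len[OF st2] by auto
  have a': "asok P PA t1'" "obsok P t1'" "rm P t1'"
    using asok_step[OF st1 a(1)] obsok_step[OF st1 a(2)] rm_step[OF st1 a(3)] by auto
  show ?thesis
  proof (cases "ds = [DForce]")
    case True
    obtain u1 where f1: "seq_step (t,s1,m1) os1 (u1,s1,m1)" "s1' = s1" "m1' = m1" "b1'"
      using spec_force[OF st1 True] by blast
    obtain u2 where f2: "seq_step (t,s2,m2) os2 (u2,s2,m2)" "s2' = s2" "m2' = m2" "b2'"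
      using spec_force[OF st2 True] by blast
    have ne1: "os1 \<noteq> []" "os2 \<noteq> []" using l1 True by auto
    obtain c1' where g1: "seq_step (c1,s1,m1) os1 (c1',s1,m1)"
      using sim_step[OF sim1 f1(1) b(1) u1] ne1 by blast
    obtain c2' where g2: "seq_step (c2,s2,m2) os2 (c2',s2,m2)"
      using sim_step[OF sim2 f2(1) b(2) u2] ne1 by blast
    have oe: "os1 = os2" using seq_equiv_both[OF se g1 g2] l1 by simp
    have st2': "spec_step (t,s2,m2,False) ds os1 (t2',s2',m2',b2')" using st2 oe by simp
    have te: "t1' = t2'" by (rule spec_det[OF st1 st2'])
    have pb1: "pendB s1 t1'" using sim_force[OF sim1 st1 True] .
    have pb2: "pendB s2 t2'" using sim_force[OF sim2 st2 True] .
    have "J2 P PA t1' s1' s2'" unfolding J2_def bok_def E2_def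
      using a' pb1 pb2 te f1 f2 b pe(1) unfolding pub_equiv_def by simp
    then show ?thesis using oe te f1(4) f2(4) by simp
  next
    case False
    have q1: "\<not> b1'" "seq_step (t,s1,m1) os1 (t1',s1',m1')" using spec_to_seq[OF st1 _ False] by simp_all
    have q2: "\<not> b2'" "seq_step (t,s2,m2) os2 (t2',s2',m2')" using spec_to_seq[OF st2 _ False] by simp_all
    obtain c1'' where S1: "sim P s1' t1' c1''"
      and R1: "(os1 = [] \<and> s1' = s1 \<and> m1' = m1 \<and> c1'' = c1) \<or> seq_step (c1,s1,m1) os1 (c1'',s1',m1')"
      using sim_step[OF sim1 q1(2) b(1) u1] by blast
    obtain c2'' where S2: "sim P s2' t2' c2''"
      and R2: "(os2 = [] \<and> s2' = s2 \<and> m2' = m2 \<and> c2'' = c2) \<or> seq_step (c2,s2,m2) os2 (c2'',s2',m2')"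
      using sim_step[OF sim2 q2(2) b(2) u2] by blast
    have oe: "os1 = os2"
    proof (cases "os1 = []")
      case True then show ?thesis using l1 by simp
    next
      case False
      then have "os2 \<noteq> []" using l1 by auto
      then have "seq_step (c1,s1,m1) os1 (c1'',s1',m1')" "seq_step (c2,s2,m2) os2 (c2'',s2',m2')"
        using R1 R2 False by auto
      then show ?thesis using seq_equiv_both[OF se] l1 by auto
    qed
    have st2': "spec_step (t,s2,m2,False) ds os1 (t2',s2',m2',b2')" using st2 oe by simp
    have te: "t1' = t2'" by (rule spec_det[OF st1 st2'])
    have se': "seq_equiv (c1'',s1',m1') (c2'',s2',m2')"
    proof -
      { assume x1: "seq_step (c1,s1,m1) os1 (c1'',s1',m1')" and x2: "seq_step (c2,s2,m2) os2 (c2'',s2',m2')"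
        then have ?thesis using seq_equiv_both[OF se x1 x2] oe by simp }
      moreover
      { assume x1: "seq_step (c1,s1,m1) os1 (c1'',s1',m1')" and x2: "os2 = [] \<and> s2' = s2 \<and> m2' = m2 \<and> c2'' = c2"
        then have "os1 = []" using oe by simp
        then have ?thesis using seq_equiv_left[OF se] x1 x2 by simp }
      moreover
      { assume x1: "os1 = [] \<and> s1' = s1 \<and> m1' = m1 \<and> c1'' = c1" and x2: "seq_step (c2,s2,m2) os2 (c2'',s2',m2')"
        then have "os2 = []" using oe by simp
        then have ?thesis using seq_equiv_right[OF se] x1 x2 by simp }
      moreover
      { assume x1: "os1 = [] \<and> s1' = s1 \<and> m1' = m1 \<and> c1'' = c1" and x2: "os2 = [] \<and> s2' = s2 \<and> m2' = m2 \<and> c2'' = c2"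
        then have ?thesis using se by simp }
      ultimately show ?thesis using R1 R2 by blast
    qed
    have v1: "bvar \<notin> used_vars c1'' \<and> s1' bvar = 0"
      using R1 u1 b(1) seq_vars[of c1 s1 m1 os1 c1'' s1' m1'] by auto
    have v2: "bvar \<notin> used_vars c2'' \<and> s2' bvar = 0"
      using R2 u2 b(2) seq_vars[of c2 s2 m2 os2 c2'' s2' m2'] by auto
    have pp: "pub_equiv P s1' s2' \<and> pub_equiv_mem PA m1' m2'"
      using pe1[OF q1(2) q2(2) a(1) pe b] v1 v2 by simp
    have "J1 P PA t1' s1' m1' s2' m2'" unfolding J1_def
      using a' v1 v2 pp S1 S2 te se' by blast
    then show ?thesis using oe te q1(1) q2(1) by simp
  qed
qed

lemma joint: "Jinv P PA (t1,s1,m1,b1) (t2,s2,m2,b2) \<Longrightarrow> spec_step (t1,s1,m1,b1) ds os1 (t1',s1',m1',b1') \<Longrightarrow>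
  spec_step (t2,s2,m2,b2) ds os2 (t2',s2',m2',b2') \<Longrightarrow> os1 = os2 \<and> Jinv P PA (t1',s1',m1',b1') (t2',s2',m2',b2')"
proof -
  assume J: "Jinv P PA (t1,s1,m1,b1) (t2,s2,m2,b2)"
    and st1: "spec_step (t1,s1,m1,b1) ds os1 (t1',s1',m1',b1')"
    and st2: "spec_step (t2,s2,m2,b2) ds os2 (t2',s2',m2',b2')"
  have tt: "t1 = t2" using J by simp
  show ?thesis
  proof (cases b1)
    case True
    then have j: "b2" "J2 P PA t1 s1 s2" using J by auto
    have st1': "spec_step (t1,s1,m1,True) ds os1 (t1',s1',m1',b1')" using st1 True by simp
    have st2': "spec_step (t1,s2,m2,True) ds os2 (t2',s2',m2',b2')" using st2 j(1) tt by simp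
    show ?thesis by (rule joint2[OF j(2) st1' st2'])
  next
    case False
    then have j: "\<not> b2" "J1 P PA t1 s1 m1 s2 m2" using J by auto
    have st1': "spec_step (t1,s1,m1,False) ds os1 (t1',s1',m1',b1')" using st1 False by simp
    have st2': "spec_step (t1,s2,m2,False) ds os2 (t2',s2',m2',b2')" using st2 j(1) tt by simp
    show ?thesis by (rule joint1[OF j(2) st1' st2'])
  qed
qed

lemma steps_inv: "spec_steps cfg D Ob cfg' \<Longrightarrow> (D = [] \<and> Ob = []) \<or>
  (\<exists>ds os c ds' os'. spec_step cfg ds os c \<and> spec_steps c ds' os' cfg' \<and> D = ds @ ds' \<and> Ob = os @ os')"
  by (erule spec_steps.cases) blast+

lemma main_lemma: "spec_steps cfg1 D O1 cfg1' \<Longrightarrow> spec_steps cfg2 D O2 cfg2' \<Longrightarrow> Jinv P PA cfg1 cfg2 \<Longrightarrow> O1 = O2"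
proof (induction arbitrary: cfg2 O2 rule: spec_steps.induct)
  case (refl cfg)
  then have "length O2 = 0" using spec_steps_len by fastforce
  then show ?case by simp
next
  case (step cfg ds os cfg' ds' os' cfg'')
  from steps_inv[OF step.prems(1)] show ?case
  proof (elim disjE exE conjE)
    assume "ds @ ds' = []" "O2 = []"
    then have "length os = 0" "length os' = 0"
      using spec_len[OF step.hyps(1)] spec_steps_len[OF step.hyps(2)] by auto
    then show ?thesis using \<open>O2 = []\<close> by simp
  next
    fix ds2 os2 c ds2' os2'
    assume s2: "spec_step cfg2 ds2 os2 c" and ss2: "spec_steps c ds2' os2' cfg2'"
      and d: "ds @ ds' = ds2 @ ds2'" and o: "O2 = os2 @ os2'"
    obtain t1 s1 m1 b1 where c1: "cfg = (t1,s1,m1,b1)" by (cases cfg)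
    obtain t2 s2 m2 b2 where c2: "cfg2 = (t2,s2,m2,b2)" by (cases cfg2)
    obtain t1' s1' m1' b1' where c1': "cfg' = (t1',s1',m1',b1')" by (cases cfg')
    obtain t2' s2' m2' b2' where c2': "c = (t2',s2',m2',b2')" by (cases c)
    have tt: "t1 = t2" using step.prems(2) c1 c2 by simp
    have J': "Jinv P PA (t1,s1,m1,b1) (t2,s2,m2,b2)" using step.prems(2) c1 c2 by auto
    have st1: "spec_step (t1,s1,m1,b1) ds os (t1',s1',m1',b1')" using step.hyps(1) c1 c1' by simp
    have st2a: "spec_step (t1,s2,m2,b2) ds2 os2 (t2',s2',m2',b2')" using s2 c2 c2' tt by simp
    have "length ds = length ds2" by (rule spec_len2[OF st1 st2a])
    then have dd: "ds = ds2" "ds' = ds2'" using d by auto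
    have st2: "spec_step (t2,s2,m2,b2) ds os2 (t2',s2',m2',b2')" using s2 c2 c2' dd by simp
    have "os = os2 \<and> Jinv P PA cfg' c" using joint[OF J' st1 st2] c1' c2' by auto
    moreover have "os' = os2'" using step.IH[of c os2'] ss2 dd calculation by simp
    ultimately show ?thesis using o by simp
  qed
qed

theorem theorem6p1:
  fixes P :: "vname \<Rightarrow> label" and PA :: "aname \<Rightarrow> label" and c :: com
    and \<rho>1 \<rho>2 :: state and \<mu>1 \<mu>2 :: mem
  assumes "bvar \<notin> used_vars c"
    and "\<rho>1 bvar = 0" and "\<rho>2 bvar = 0"
    and "\<forall>a. length (\<mu>1 a) > 0" and "\<forall>a. length (\<mu>2 a) > 0"
    and "well_typed P PA True c"
    and "pub_equiv P \<rho>1 \<rho>2"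
    and "pub_equiv_mem PA \<mu>1 \<mu>2"
    and "seq_equiv (c, \<rho>1, \<mu>1) (c, \<rho>2, \<mu>2)"
  shows "spec_equiv (fvslh P c, \<rho>1, \<mu>1, False) (fvslh P c, \<rho>2, \<mu>2, False)"
  unfolding spec_equiv_def
proof (intro allI impI)
  fix D O1 O2 cfg1' cfg2'
  assume s1: "spec_steps (fvslh P c, \<rho>1, \<mu>1, False) D O1 cfg1'"
    and s2: "spec_steps (fvslh P c, \<rho>2, \<mu>2, False) D O2 cfg2'"
  have io: "asok P PA (fvslh P c) \<and> obsok P (fvslh P c) \<and> rm P (fvslh P c)"
    using init_ok[OF assms(6) assms(1)] .
  have "J1 P PA (fvslh P c) \<rho>1 \<mu>1 \<rho>2 \<mu>2" unfolding J1_def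
    using io assms(1,2,3,7,8,9) sim_T[of P \<rho>1 c] sim_T[of P \<rho>2 c] by blast
  then have "Jinv P PA (fvslh P c, \<rho>1, \<mu>1, False) (fvslh P c, \<rho>2, \<mu>2, False)" by simp
  then show "O1 = O2" using main_lemma[OF s1 s2] by blast
qed

end
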